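(* Let $\Sigma$ be a non-empty finite or countably infinite alphabet, let $\mu_p$ be the probability map induced by a Bernoulli distribution $p$ on $\Sigma$, and let $\alpha\in\Sigma^\omega$ be $\mu_p$-distributed. The following are equivalent: (i) for every strongly connected DFA $A$ over $\Sigma$, if $A[\alpha]$ is infinite then $A[\alpha]$ is $\mu_p$-distributed; (ii) for every strongly connected DFA $A$ over $\Sigma$ and every $a\in\Sigma$, if $A[\alpha]$ is infinite then the limiting frequency $\lim_{N\to\infty}\#_a(A[\alpha]|_{\le N})/N$ exists and equals $p(a)$.
   Context: $\mu_p(a_1\cdots a_n)=\prod_i p(a_i)$ for $p:\Sigma\to[0,1]$ with $\sum_ap(a)=1$. $\#_w(v)$ counts occurrences of $w$ as a contiguous block in $v$; $\beta|_{\le N}$ is the length-$N$ prefix of $\beta$; $\beta\in\Sigma^\omega$ is $\mu_p$-distributed if $\lim_N\#_w(\beta|_{\le N})/N=\mu_p(w)$ for all $w\in\Sigma^+$. A DFA over $\Sigma$ has finitely many states, total transition function $\delta$, start state $q_s$ and accepting set $F$; $A[\alpha]$ is the subsequence of those $\alpha_i$ with $\delta^*(q_s,\alpha_1\cdots\alpha_{i-1})\in F$. $A$ is strongly connected if its underlying directed graph (edges $q\to\delta(q,a)$) is strongly connected. *)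

theory Defs
  imports "HOL-Analysis.Analysis" "HOL-Library.Countable"
begin

definition bernoulli_dist :: "('a \<Rightarrow> real) \<Rightarrow> bool" where
  "bernoulli_dist p \<longleftrightarrow> (\<forall>a. 0 \<le> p a \<and> p a \<le> 1) \<and> (p has_sum 1) UNIV"

definition mu :: "('a \<Rightarrow> real) \<Rightarrow> 'a list \<Rightarrow> real" where
  "mu p w = prod_list (map p w)"

definition occ :: "'a list \<Rightarrow> (nat \<Rightarrow> 'a) \<Rightarrow> nat \<Rightarrow> nat" where
  "occ w \<beta> N = card {i. i + length w \<le> N \<and> (\<forall>j<length w. \<beta> (i + j) = w ! j)}"

definition mu_distributed :: "('a \<Rightarrow> real) \<Rightarrow> (nat \<Rightarrow> 'a) \<Rightarrow> bool" where
  "mu_distributed p \<beta> \<longleftrightarrow>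
     (\<forall>w. w \<noteq> [] \<longrightarrow> (\<lambda>N. real (occ w \<beta> N) / real N) \<longlonglongrightarrow> mu p w)"

record ('s, 'a) dfa =
  states :: "'s set"
  delta  :: "'s \<Rightarrow> 'a \<Rightarrow> 's"
  start  :: 's
  accept :: "'s set"

definition wf_dfa :: "('s, 'a) dfa \<Rightarrow> bool" where
  "wf_dfa A \<longleftrightarrow> finite (states A) \<and> start A \<in> states A \<and> accept A \<subseteq> states A \<and>
     (\<forall>q\<in>states A. \<forall>a. delta A q a \<in> states A)"

definition dfa_edges :: "('s, 'a) dfa \<Rightarrow> ('s \<times> 's) set" where
  "dfa_edges A = {(q, delta A q a) | q a. q \<in> states A}"

definition strongly_connected :: "('s, 'a) dfa \<Rightarrow> bool" where
  "strongly_connected A \<longleftrightarrow> (\<forall>q\<in>states A. \<forall>q'\<in>states A. (q, q') \<in> (dfa_edges A)\<^sup>*)"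

primrec run :: "('s, 'a) dfa \<Rightarrow> (nat \<Rightarrow> 'a) \<Rightarrow> nat \<Rightarrow> 's" where
  "run A \<alpha> 0 = start A"
| "run A \<alpha> (Suc i) = delta A (run A \<alpha> i) (\<alpha> i)"

definition selected :: "('s, 'a) dfa \<Rightarrow> (nat \<Rightarrow> 'a) \<Rightarrow> nat set" where
  "selected A \<alpha> = {i. run A \<alpha> i \<in> accept A}"

text \<open>A[alpha] as a sequence (meaningful when selected A alpha is infinite).\<close>
definition dfa_select :: "('s, 'a) dfa \<Rightarrow> (nat \<Rightarrow> 'a) \<Rightarrow> nat \<Rightarrow> 'a" where
  "dfa_select A \<alpha> = (\<lambda>k. \<alpha> (enumerate (selected A \<alpha>) k))"

end

theory Submission
  imports Defs
begin


lemma enum_prefix: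
  fixes X :: "nat set"
  assumes "infinite X"
  shows "\<exists>n. {m\<in>X. m<t} = enumerate X ` {..<n}"
proof -
  let ?e = "enumerate X"
  define n where "n = (LEAST j. t \<le> ?e j)"
  have ex: "t \<le> ?e t" using le_enumerate[OF assms] .
  have n1: "t \<le> ?e n" unfolding n_def by (rule LeastI[of _ t], rule ex)
  have J: "{j. ?e j < t} = {..<n}"
  proof safe
    fix j assume "?e j < t" show "j < n"
    proof (rule ccontr)
      assume "\<not> j < n" then have "?e n \<le> ?e j" using assms by simp
      with n1 \<open>?e j < t\<close> show False by simp
    qed
  next
    fix j assume "j < n" then show "?e j < t" unfolding n_def
      using not_less_Least by (metis not_le)
  qed
  have "{m\<in>X. m<t} = ?e ` {j. ?e j < t}"
    using bij_enumerate[OF assms] by (auto simp: bij_betw_def)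
  then show ?thesis using J by auto
qed

lemma count_enum:
  fixes X :: "nat set"
  assumes "infinite X"
  shows "card {m\<in>X. m<t \<and> P m} = card {j. j < card {m\<in>X. m<t} \<and> P (enumerate X j)}"
proof -
  obtain n where n: "{m\<in>X. m<t} = enumerate X ` {..<n}" using enum_prefix[OF assms] by blast
  have inj: "inj (enumerate X)" using inj_enumerate[OF assms] .
  have c: "card {m\<in>X. m<t} = n" using n inj by (simp add: card_image inj_on_subset)
  have "{m\<in>X. m<t \<and> P m} = enumerate X ` {j. j < n \<and> P (enumerate X j)}"
    using n by auto
  then have "card {m\<in>X. m<t \<and> P m} = card {j. j < n \<and> P (enumerate X j)}"
    using inj by (simp add: card_image inj_on_subset)
  then show ?thesis using c by simp
qed

lemma occ_single: "occ [a] \<gamma> n = card {j. j < n \<and> \<gamma> j = a}"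
  unfolding occ_def by (rule arg_cong[where f=card]) auto

definition lastk :: "nat \<Rightarrow> 'b list \<Rightarrow> 'b list" where
  "lastk k xs = rev (take k (rev xs))"

lemma lastk_append_lastk: "lastk k (lastk k xs @ ys) = lastk k (xs @ ys)"
  unfolding lastk_def by (simp add: take_append)

lemma lastk_long: "k \<le> length ys \<Longrightarrow> lastk k (xs @ ys) = lastk k ys"
  unfolding lastk_def by (simp add: take_append)

lemma lastk_short: "length xs \<le> k \<Longrightarrow> lastk k xs = xs"
  unfolding lastk_def by simp

lemma length_lastk: "length (lastk k xs) \<le> k"
  unfolding lastk_def by simp

lemma set_lastk: "set (lastk k xs) \<subseteq> set xs"
  unfolding lastk_def by (metis in_set_takeD set_rev subsetI)

lemma lastk_upt: "k \<le> m \<Longrightarrow> lastk k (map f [0..<m]) = map f [m-k..<m]"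
proof -
  assume "k \<le> m"
  then have "[0..<m] = [0..<m-k] @ [m-k..<m]"
    by (metis diff_le_self le0 upt_add_eq_append add_0 le_add_diff_inverse2)
  then have "map f [0..<m] = map f [0..<m-k] @ map f [m-k..<m]" by simp
  then show ?thesis using \<open>k \<le> m\<close> by (simp add: lastk_long lastk_short)
qed

lemma bounded_diff_ratio:
  fixes f g :: "nat \<Rightarrow> real"
  assumes "(\<lambda>t. g t / D t) \<longlonglongrightarrow> L" "\<And>t. \<bar>f t - g t\<bar> \<le> K"
    and "filterlim D at_top sequentially"
  shows "(\<lambda>t. f t / D t) \<longlonglongrightarrow> L"
proof -
  have "(\<lambda>t. K / D t) \<longlonglongrightarrow> 0"
    by (rule tendsto_divide_0[OF tendsto_const filterlim_at_top_imp_at_infinity[OF assms(3)]])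
  moreover have ev: "eventually (\<lambda>t. D t > 0) sequentially"
    using assms(3) by (simp add: filterlim_at_top_dense)
  have "(\<lambda>t. (f t - g t) / D t) \<longlonglongrightarrow> 0"
  proof (rule Lim_null_comparison[OF _ calculation])
    show "\<forall>\<^sub>F t in sequentially. norm ((f t - g t) / D t) \<le> K / D t"
      using ev
    proof eventually_elim
      case (elim t) then show ?case using assms(2)[of t]
        by (simp add: abs_divide divide_right_mono)
    qed
  qed
  from tendsto_add[OF assms(1) this] show ?thesis
    by (simp add: diff_divide_distrib)
qed

lemma ratio_Suc:
  fixes f :: "nat \<Rightarrow> real"
  assumes "(\<lambda>t. f t / real t) \<longlonglongrightarrow> L"
  shows "(\<lambda>t. f t / real (Suc t)) \<longlonglongrightarrow> L"
proof -
  have "(\<lambda>t. f t / real t * (real t / real (Suc t))) \<longlonglongrightarrow> L * 1"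
    by (rule tendsto_mult[OF assms LIMSEQ_n_over_Suc_n])
  then have "(\<lambda>t. f t / real t * (real t / real (Suc t))) \<longlonglongrightarrow> L" by simp
  moreover have "eventually (\<lambda>t. f t / real t * (real t / real (Suc t)) = f t / real (Suc t)) sequentially"
    using eventually_gt_at_top[of 0] by eventually_elim simp
  ultimately show ?thesis by (rule Lim_transform_eventually)
qed



definition col :: "'a list \<Rightarrow> 'a \<Rightarrow> 'a option" where
  "col u c = (if c \<in> set u then Some c else None)"

definition pstep :: "('s,'a) dfa \<Rightarrow> 'a list \<Rightarrow> 's \<times> 'a option list \<Rightarrow> 'a \<Rightarrow> 's \<times> 'a option list" where
  "pstep A u z c = (delta A (fst z) c,
     if fst z \<in> accept A then lastk (length u) (snd z @ [col u c]) else snd z)"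

primrec sels :: "('s,'a) dfa \<Rightarrow> 's \<Rightarrow> 'a list \<Rightarrow> 'a list" where
  "sels A q [] = []"
| "sels A q (c # v) = (if q \<in> accept A then [c] else []) @ sels A (delta A q c) v"

lemma foldl_pstep:
  "length h \<le> length u \<Longrightarrow> foldl (pstep A u) (q,h) v =
     (foldl (delta A) q v, lastk (length u) (h @ map (col u) (sels A q v)))"
proof (induction v arbitrary: q h)
  case Nil then show ?case by (simp add: lastk_short)
next
  case (Cons c v)
  show ?case
  proof (cases "q \<in> accept A")
    case True
    have "foldl (pstep A u) (q,h) (c#v) = foldl (pstep A u) (delta A q c, lastk (length u) (h @ [col u c])) v"
      using True by (simp add: pstep_def)
    also have "\<dots> = (foldl (delta A) (delta A q c) v,
        lastk (length u) (lastk (length u) (h @ [col u c]) @ map (col u) (sels A (delta A q c) v)))"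
      by (rule Cons.IH) (rule length_lastk)
    finally show ?thesis using True by (simp add: lastk_append_lastk)
  next
    case False
    have "foldl (pstep A u) (q,h) (c#v) = foldl (pstep A u) (delta A q c, h) v"
      using False by (simp add: pstep_def)
    also have "\<dots> = (foldl (delta A) (delta A q c) v,
        lastk (length u) (h @ map (col u) (sels A (delta A q c) v)))"
      by (rule Cons.IH) (rule Cons.prems)
    finally show ?thesis using False by simp
  qed
qed

lemma sels_append: "sels A q (v @ w) = sels A q v @ sels A (foldl (delta A) q v) w"
  by (induction v arbitrary: q) auto

lemma path_word:
  assumes "(q, q') \<in> (dfa_edges A)\<^sup>*"
  shows "\<exists>y. foldl (delta A) q y = q'"
  using assms
proof (induction rule: rtrancl_induct)
  case base then show ?case by (rule exI[of _ "[]"]) simp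
next
  case (step x z)
  then obtain y where y: "foldl (delta A) q y = x" by blast
  from step(2) obtain a where "z = delta A x a" unfolding dfa_edges_def by blast
  then show ?case using y by (intro exI[of _ "y @ [a]"]) simp
qed

lemma run_foldl: "run A \<alpha> i = foldl (delta A) (start A) (map \<alpha> [0..<i])"
  by (induction i) auto

lemma foldl_states: "wf_dfa A \<Longrightarrow> q \<in> states A \<Longrightarrow> foldl (delta A) q v \<in> states A"
  by (induction v arbitrary: q) (auto simp: wf_dfa_def)

lemma run_states: "wf_dfa A \<Longrightarrow> run A \<alpha> i \<in> states A"
  by (induction i) (auto simp: wf_dfa_def)

lemma sels_run: "sels A (start A) (map \<alpha> [0..<i]) = map \<alpha> (filter (\<lambda>j. j \<in> selected A \<alpha>) [0..<i])"
  by (induction i) (auto simp: sels_append run_foldl[symmetric] selected_def)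

lemma filter_enum:
  assumes "strict_mono e"
  shows "filter (\<lambda>j. j \<in> range (e::nat\<Rightarrow>nat)) [0..<e m] = map e [0..<m]"
proof (induction m)
  case 0
  have "filter (\<lambda>j. j \<in> range e) [0..<e 0] = []"
    using assms by (auto simp: filter_empty_conv strict_mono_less)
  then show ?case by simp
next
  case (Suc m)
  have le: "e m \<le> e (Suc m)" using assms by (simp add: strict_mono_less_eq)
  have "[0..<e (Suc m)] = [0..<e m] @ [e m..<e (Suc m)]"
    using le by (metis le0 upt_add_eq_append le_add_diff_inverse)
  moreover have "filter (\<lambda>j. j \<in> range e) [e m..<e (Suc m)] = [e m]"
  proof -
    have lt: "e m < e (Suc m)" using assms by (simp add: strict_mono_less)
    then have "[e m..<e (Suc m)] = e m # [Suc (e m)..<e (Suc m)]" by (simp add: upt_conv_Cons)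
    moreover have "filter (\<lambda>j. j \<in> range e) [Suc (e m)..<e (Suc m)] = []"
    proof (rule filter_False, clarsimp)
      fix x assume a: "Suc (e m) \<le> e x" "e x < e (Suc m)"
      have "m < x" using a(1) assms by (simp add: Suc_le_eq strict_mono_less)
      moreover have "x < Suc m" using a(2) assms by (simp add: strict_mono_less)
      ultimately show False by simp
    qed
    ultimately show ?thesis by simp
  qed
  ultimately show ?case using Suc by simp
qed



lemma card_between:
  assumes "finite B" "A \<subseteq> B" "B - A \<subseteq> {..<k::nat}"
  shows "card A \<le> card B \<and> card B \<le> card A + k"
proof
  show "card A \<le> card B" using assms by (simp add: card_mono)
  have "card B \<le> card A + card (B - A)"
    by (metis Un_Diff_cancel2 Un_commute card_Un_le sup.absorb_iff2 assms(2))
  also have "card (B - A) \<le> k" using card_mono[OF _ assms(3)] by simp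
  finally show "card B \<le> card A + k" by simp
qed

lemma main_step:
  fixes A :: "(nat,'a::countable) dfa" and \<alpha> :: "nat \<Rightarrow> 'a" and u :: "'a list" and a :: 'a
  assumes wf: "wf_dfa A" and sc: "strongly_connected A" and inf: "infinite (selected A \<alpha>)"
    and hyp: "\<And>B :: (nat,'a) dfa. wf_dfa B \<Longrightarrow> strongly_connected B \<Longrightarrow> infinite (selected B \<alpha>) \<Longrightarrow>
        (\<lambda>N. real (occ [a] (dfa_select B \<alpha>) N) / real N) \<longlonglongrightarrow> p a"
    and IH: "(\<lambda>N. real (occ u (dfa_select A \<alpha>) N) / real N) \<longlonglongrightarrow> mu p u"
  shows "(\<lambda>N. real (occ (u@[a]) (dfa_select A \<alpha>) N) / real N) \<longlonglongrightarrow> mu p (u@[a])"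
proof -
  define S where "S = selected A \<alpha>"
  define e where "e = enumerate S"
  define \<beta> where "\<beta> = dfa_select A \<alpha>"
  have infS: "infinite S" using inf S_def by simp
  have \<beta>: "\<And>m. \<beta> m = \<alpha> (e m)" unfolding \<beta>_def dfa_select_def e_def S_def by simp
  have sm: "strict_mono e" unfolding e_def strict_mono_def using infS by simp
  have rng: "range e = S" using bij_enumerate[OF infS] e_def by (simp add: bij_betw_def)
  define k where "k = length u"
  define w1 where "w1 = map \<alpha> [0..<e k]"
  have st: "start A \<in> states A" using wf by (simp add: wf_dfa_def)
  have q1: "foldl (delta A) (start A) w1 \<in> states A"
    using run_states[OF wf] run_foldl unfolding w1_def by metis
  obtain y1 where y1: "foldl (delta A) (foldl (delta A) (start A) w1) y1 = start A"
  proof -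
    have "(foldl (delta A) (start A) w1, start A) \<in> (dfa_edges A)\<^sup>*"
      using sc[unfolded strongly_connected_def, rule_format, OF q1 st] .
    from path_word[OF this] obtain y where "foldl (delta A) (foldl (delta A) (start A) w1) y = start A" ..
    then show ?thesis by (rule that)
  qed
  define w0 where "w0 = w1 @ y1"
  have w0s: "foldl (delta A) (start A) w0 = start A" unfolding w0_def foldl_append by (rule y1)
  have "sels A (start A) w1 = map \<alpha> (map e [0..<k])"
    unfolding w1_def sels_run S_def[symmetric] using filter_enum[OF sm, of k] rng by simp
  then have w0k: "k \<le> length (sels A (start A) w0)"
    unfolding w0_def sels_append by simp
  define x0 where "x0 = lastk k (map (col u) (sels A (start A) w0))"
  define z0 where "z0 = (start A, x0)"
  have z0eq: "foldl (pstep A u) (start A, []) w0 = z0"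
    using foldl_pstep[of "[]" u A "start A" w0] w0s unfolding z0_def x0_def k_def by simp
  have x0len: "length x0 \<le> k" unfolding x0_def by (rule length_lastk)
  define R where "R = range (foldl (pstep A u) z0)"
  have Rform: "\<And>v. foldl (pstep A u) z0 v = (foldl (delta A) (start A) v,
      lastk k (x0 @ map (col u) (sels A (start A) v)))"
    unfolding z0_def k_def by (rule foldl_pstep) (use x0len k_def in simp)
  define \<Gamma> where "\<Gamma> = insert None (Some ` set u)"
  have col\<Gamma>: "\<And>c. col u c \<in> \<Gamma>" unfolding col_def \<Gamma>_def by auto
  have x0\<Gamma>: "set x0 \<subseteq> \<Gamma>" unfolding x0_def using set_lastk col\<Gamma> by fastforce
  have Rsub: "R \<subseteq> states A \<times> {h. set h \<subseteq> \<Gamma> \<and> length h \<le> k}"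
  proof
    fix z assume "z \<in> R"
    then obtain v where v: "z = foldl (pstep A u) z0 v" unfolding R_def by blast
    have "set (lastk k (x0 @ map (col u) (sels A (start A) v))) \<subseteq> \<Gamma>"
      using set_lastk[of k "x0 @ map (col u) (sels A (start A) v)"] x0\<Gamma> col\<Gamma> by auto
    then show "z \<in> states A \<times> {h. set h \<subseteq> \<Gamma> \<and> length h \<le> k}"
      using v Rform foldl_states[OF wf st] length_lastk by auto
  qed
  have fin\<Gamma>: "finite \<Gamma>" unfolding \<Gamma>_def by simp
  have finR: "finite R"
    using Rsub finite_lists_length_le[OF fin\<Gamma>, of k] wf unfolding wf_dfa_def
    by (meson finite_SigmaI finite_subset)
  have Rclosed: "\<And>z c. z \<in> R \<Longrightarrow> pstep A u z c \<in> R"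
  proof -
    fix z c assume "z \<in> R"
    then obtain v where v: "z = foldl (pstep A u) z0 v" unfolding R_def by blast
    then have "pstep A u z c = foldl (pstep A u) z0 (v @ [c])" by simp
    then show "pstep A u z c \<in> R" unfolding R_def by blast
  qed
  have z0R: "z0 \<in> R" unfolding R_def by (metis foldl_Nil rangeI)
  define B :: "(nat,'a) dfa" where "B = \<lparr>states = to_nat ` R,
      delta = (\<lambda>n c. to_nat (pstep A u (from_nat n) c)), start = to_nat z0,
      accept = to_nat ` (R \<inter> {z. fst z \<in> accept A \<and> snd z = map Some u})\<rparr>"
  have wfB: "wf_dfa B" unfolding wf_dfa_def B_def using finR z0R Rclosed by auto
  have reachB: "\<And>v z. z \<in> R \<Longrightarrow> (to_nat z, to_nat (foldl (pstep A u) z v)) \<in> (dfa_edges B)\<^sup>*"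
  proof -
    fix v show "\<And>z. z \<in> R \<Longrightarrow> (to_nat z, to_nat (foldl (pstep A u) z v)) \<in> (dfa_edges B)\<^sup>*"
    proof (induction v)
      case Nil then show ?case by simp
    next
      case (Cons c v)
      have e1: "(to_nat z, to_nat (pstep A u z c)) \<in> dfa_edges B"
        unfolding dfa_edges_def B_def using Cons.prems by force
      have "(to_nat (pstep A u z c), to_nat (foldl (pstep A u) (pstep A u z c) v)) \<in> (dfa_edges B)\<^sup>*"
        using Cons.IH Rclosed Cons.prems by blast
      then show ?case using e1 by (simp add: converse_rtrancl_into_rtrancl)
    qed
  qed
  have connR: "\<And>z1 z2. z1 \<in> R \<Longrightarrow> z2 \<in> R \<Longrightarrow> \<exists>v. foldl (pstep A u) z1 v = z2"
  proof -
    fix z1 z2 assume z1: "z1 \<in> R" and z2: "z2 \<in> R"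
    then obtain v2 where v2: "z2 = foldl (pstep A u) z0 v2" unfolding R_def by blast
    obtain q h where qh: "z1 = (q, h)" by (cases z1)
    have q: "q \<in> states A" and h: "length h \<le> k" using z1 Rsub qh by auto
    obtain y where y: "foldl (delta A) q y = start A"
    proof -
      have "(q, start A) \<in> (dfa_edges A)\<^sup>*"
        using sc[unfolded strongly_connected_def, rule_format, OF q st] .
      from path_word[OF this] obtain y where "foldl (delta A) q y = start A" ..
      then show ?thesis by (rule that)
    qed
    have f1: "foldl (pstep A u) (q,h) y = (start A, lastk k (h @ map (col u) (sels A q y)))"
      using foldl_pstep[of h u A q y] h y k_def by simp
    have f2: "\<And>h'. length h' \<le> k \<Longrightarrow> foldl (pstep A u) (start A, h') w0 = z0"
      using foldl_pstep w0s w0k lastk_long unfolding z0_def x0_def k_def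
      by (metis append_Nil length_map)
    have "foldl (pstep A u) z1 (y @ w0 @ v2) = z2"
      using qh v2 f1 f2[OF length_lastk] by simp
    then show "\<exists>v. foldl (pstep A u) z1 v = z2" by blast
  qed
  have scB: "strongly_connected B"
    unfolding strongly_connected_def
  proof (intro ballI)
    fix n1 n2 assume "n1 \<in> states B" "n2 \<in> states B"
    then obtain z1 z2 where "z1 \<in> R" "z2 \<in> R" "n1 = to_nat z1" "n2 = to_nat z2"
      unfolding B_def by auto
    then show "(n1, n2) \<in> (dfa_edges B)\<^sup>*" using connR reachB by metis
  qed
  have runB: "\<And>i. run B \<alpha> i = to_nat (foldl (pstep A u) z0 (map \<alpha> [0..<i]))"
  proof -
    fix i show "run B \<alpha> i = to_nat (foldl (pstep A u) z0 (map \<alpha> [0..<i]))"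
      by (induction i) (simp_all add: B_def)
  qed
  define Mx where "Mx = {m. lastk k (x0 @ map (col u) (map \<beta> [0..<m])) = map Some u}"
  have sel_iff: "\<And>i. i \<in> selected B \<alpha> \<longleftrightarrow> i \<in> S \<and>
      lastk k (x0 @ map (col u) (map \<alpha> (filter (\<lambda>j. j \<in> S) [0..<i]))) = map Some u"
  proof -
    fix i
    have inR: "foldl (pstep A u) z0 (map \<alpha> [0..<i]) \<in> R" unfolding R_def by blast
    have "i \<in> selected B \<alpha> \<longleftrightarrow> foldl (pstep A u) z0 (map \<alpha> [0..<i]) \<in> R \<inter> {z. fst z \<in> accept A \<and> snd z = map Some u}"
      unfolding selected_def runB by (simp add: B_def inj_image_mem_iff)
    also have "\<dots> \<longleftrightarrow> run A \<alpha> i \<in> accept A \<and>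
        lastk k (x0 @ map (col u) (map \<alpha> (filter (\<lambda>j. j \<in> S) [0..<i]))) = map Some u"
      using inR by (simp add: Rform run_foldl[symmetric] sels_run S_def)
    finally show "?thesis i" by (simp add: S_def selected_def)
  qed
  have selB: "selected B \<alpha> = e ` Mx"
  proof -
    have fe: "\<And>m. map \<alpha> (filter (\<lambda>j. j \<in> S) [0..<e m]) = map \<beta> [0..<m]"
      using filter_enum[OF sm] rng \<beta> by simp
    show ?thesis
    proof safe
      fix i assume "i \<in> selected B \<alpha>"
      then have "i \<in> S" and c: "lastk k (x0 @ map (col u) (map \<alpha> (filter (\<lambda>j. j \<in> S) [0..<i]))) = map Some u"
        using sel_iff by auto
      then obtain m where m: "i = e m" using rng by blast
      then show "i \<in> e ` Mx" using c fe unfolding Mx_def by auto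
    next
      fix m assume "m \<in> Mx"
      have "e m \<in> S" using rng by blast
      moreover have "lastk k (x0 @ map (col u) (map \<alpha> (filter (\<lambda>j. j \<in> S) [0..<e m]))) = map Some u"
        unfolding fe using \<open>m \<in> Mx\<close> unfolding Mx_def by simp
      ultimately show "e m \<in> selected B \<alpha>" using sel_iff by blast
    qed
  qed
  have Mx_k: "\<And>m. k \<le> m \<Longrightarrow> m \<in> Mx \<longleftrightarrow> (\<forall>j<k. \<beta> (m - k + j) = u ! j)"
  proof -
    fix m assume km: "k \<le> m"
    have "lastk k (x0 @ map (col u) (map \<beta> [0..<m])) = lastk k (map (col u \<circ> \<beta>) [0..<m])"
      using km by (simp add: lastk_long)
    also have "\<dots> = map (col u \<circ> \<beta>) [m-k..<m]" using km by (rule lastk_upt)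
    finally have eq: "m \<in> Mx \<longleftrightarrow> map (col u \<circ> \<beta>) [m-k..<m] = map Some u"
      unfolding Mx_def by simp
    have "map (col u \<circ> \<beta>) [m-k..<m] = map Some u \<longleftrightarrow> (\<forall>j<k. col u (\<beta> (m - k + j)) = Some (u ! j))"
      using km by (simp add: list_eq_iff_nth_eq k_def)
    also have "\<dots> \<longleftrightarrow> (\<forall>j<k. \<beta> (m - k + j) = u ! j)"
      unfolding col_def k_def by (auto split: if_splits)
    finally show "?thesis m" using eq by simp
  qed
  define c where "c t = card {m\<in>Mx. m<t}" for t
  define num where "num t = card {m\<in>Mx. m<t \<and> \<beta> m = a}" for t
  define G where "G t = occ (u@[a]) \<beta> t" for t
  define H where "H t = occ u \<beta> t" for t
  have Gset: "\<And>t. {m. k \<le> m \<and> m < t \<and> m \<in> Mx \<and> \<beta> m = a} =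
      (\<lambda>i. i + k) ` {i. i + length (u@[a]) \<le> t \<and> (\<forall>j<length (u@[a]). \<beta> (i+j) = (u@[a]) ! j)}"
  proof -
    fix t show "?thesis t"
    proof (rule equalityI; rule subsetI)
      fix m assume "m \<in> {m. k \<le> m \<and> m < t \<and> m \<in> Mx \<and> \<beta> m = a}"
      then have m: "k \<le> m" "m < t" "m \<in> Mx" "\<beta> m = a" by auto
      have mt: "\<forall>j<k. \<beta> (m - k + j) = u ! j" using Mx_k m by blast
      have "m - k + length (u@[a]) \<le> t \<and> (\<forall>j<length (u@[a]). \<beta> (m - k + j) = (u@[a]) ! j)"
      proof (intro conjI allI impI)
        show "m - k + length (u@[a]) \<le> t" using m k_def by simp
        fix j assume "j < length (u@[a])"
        then have "j < k \<or> j = k" using k_def by auto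
        then show "\<beta> (m - k + j) = (u@[a]) ! j"
          using mt m k_def by (auto simp: nth_append)
      qed
      moreover have "m = m - k + k" using m by simp
      ultimately show "m \<in> (\<lambda>i. i + k) ` {i. i + length (u@[a]) \<le> t \<and> (\<forall>j<length (u@[a]). \<beta> (i+j) = (u@[a]) ! j)}"
        by blast
    next
      fix m assume "m \<in> (\<lambda>i. i + k) ` {i. i + length (u@[a]) \<le> t \<and> (\<forall>j<length (u@[a]). \<beta> (i+j) = (u@[a]) ! j)}"
      then obtain i where mi: "m = i + k" and i: "i + length (u@[a]) \<le> t" "\<forall>j<length (u@[a]). \<beta> (i+j) = (u@[a]) ! j"
        by blast
      have "\<beta> (i + k) = (u@[a]) ! k" using i(2) k_def by simp
      then have b: "\<beta> (i + k) = a" using k_def by simp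
      have "\<forall>j<k. \<beta> (i + k - k + j) = u ! j"
      proof (intro allI impI)
        fix j assume "j < k"
        then have "\<beta> (i+j) = (u@[a]) ! j" using i(2) k_def by simp
        then show "\<beta> (i + k - k + j) = u ! j" using \<open>j<k\<close> k_def by (simp add: nth_append)
      qed
      then have "i + k \<in> Mx" using Mx_k by simp
      then show "m \<in> {m. k \<le> m \<and> m < t \<and> m \<in> Mx \<and> \<beta> m = a}"
        using mi b i k_def by simp
    qed
  qed
  have Hset: "\<And>t. {m. k \<le> m \<and> m < Suc t \<and> m \<in> Mx} =
      (\<lambda>i. i + k) ` {i. i + length u \<le> t \<and> (\<forall>j<length u. \<beta> (i+j) = u ! j)}"
  proof -
    fix t show "?thesis t"
    proof (rule equalityI; rule subsetI)
      fix m assume "m \<in> {m. k \<le> m \<and> m < Suc t \<and> m \<in> Mx}"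
      then have m: "k \<le> m" "m < Suc t" "m \<in> Mx" by auto
      have mt: "\<forall>j<k. \<beta> (m - k + j) = u ! j" using Mx_k m by blast
      have "m - k + length u \<le> t \<and> (\<forall>j<length u. \<beta> (m - k + j) = u ! j)"
        using m mt k_def by simp
      moreover have "m = m - k + k" using m by simp
      ultimately show "m \<in> (\<lambda>i. i + k) ` {i. i + length u \<le> t \<and> (\<forall>j<length u. \<beta> (i+j) = u ! j)}"
        by blast
    next
      fix m assume "m \<in> (\<lambda>i. i + k) ` {i. i + length u \<le> t \<and> (\<forall>j<length u. \<beta> (i+j) = u ! j)}"
      then obtain i where mi: "m = i + k" and i: "i + length u \<le> t" "\<forall>j<length u. \<beta> (i+j) = u ! j"
        by blast
      have "i + k \<in> Mx" using Mx_k i k_def by simp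
      then show "m \<in> {m. k \<le> m \<and> m < Suc t \<and> m \<in> Mx}" using mi i k_def by simp
    qed
  qed
  have injk: "inj (\<lambda>i::nat. i + k)" by (simp add: inj_def)
  have Gcard: "\<And>t. G t = card {m. k \<le> m \<and> m < t \<and> m \<in> Mx \<and> \<beta> m = a}"
    unfolding G_def occ_def Gset by (simp add: card_image inj_on_subset[OF injk])
  have Hcard: "\<And>t. H t = card {m. k \<le> m \<and> m < Suc t \<and> m \<in> Mx}"
    unfolding H_def occ_def Hset by (simp add: card_image inj_on_subset[OF injk])
  have Gb: "\<And>t. G t \<le> num t \<and> num t \<le> G t + k"
    unfolding Gcard num_def by (rule card_between) auto
  have Hb: "\<And>t. H t \<le> c (Suc t) \<and> c (Suc t) \<le> H t + k"
    unfolding Hcard c_def by (rule card_between) auto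
  have mu_app: "mu p (u@[a]) = mu p u * p a" unfolding mu_def by simp
  have IH': "(\<lambda>t. real (H t) / real t) \<longlonglongrightarrow> mu p u" using IH unfolding H_def \<beta>_def .
  have Dinf: "filterlim (\<lambda>t. real (Suc t)) at_top sequentially"
    by (rule filterlim_compose[OF filterlim_real_sequentially filterlim_Suc])
  have Dinf0: "filterlim (\<lambda>t. real t) at_top sequentially" by (rule filterlim_real_sequentially)
  show ?thesis
  proof (cases "finite Mx")
    case True
    have numb: "\<And>t. num t \<le> card Mx" unfolding num_def using True by (intro card_mono) auto
    have cb: "\<And>t. c t \<le> card Mx" unfolding c_def using True by (intro card_mono) auto
    have "(\<lambda>t. real (H t) / real t) \<longlonglongrightarrow> 0"
    proof (rule bounded_diff_ratio[where g = "\<lambda>_. 0" and K = "real (card Mx)"])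
      show "(\<lambda>t. 0 / real t) \<longlonglongrightarrow> (0::real)" by simp
      fix t show "\<bar>real (H t) - 0\<bar> \<le> real (card Mx)" using Hb[of t] cb[of "Suc t"] by simp
    qed (rule Dinf0)
    then have mu0: "mu p u = 0" using IH' LIMSEQ_unique by blast
    have "(\<lambda>t. real (G t) / real t) \<longlonglongrightarrow> 0"
    proof (rule bounded_diff_ratio[where g = "\<lambda>_. 0" and K = "real (card Mx)"])
      show "(\<lambda>t. 0 / real t) \<longlonglongrightarrow> (0::real)" by simp
      fix t show "\<bar>real (G t) - 0\<bar> \<le> real (card Mx)" using Gb[of t] numb[of t] by simp
    qed (rule Dinf0)
    then show ?thesis unfolding mu_app mu0 G_def \<beta>_def by simp
  next
    case False
    define Y where "Y = selected B \<alpha>"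
    define \<gamma> where "\<gamma> = dfa_select B \<alpha>"
    have injE: "inj e" using sm by (rule strict_mono_imp_inj_on)
    have Yinf: "infinite Y" unfolding Y_def selB using False
      using finite_imageD inj_on_subset[OF injE] by blast
    have hypB: "(\<lambda>N. real (occ [a] \<gamma> N) / real N) \<longlonglongrightarrow> p a"
      unfolding \<gamma>_def by (rule hyp[OF wfB scB Yinf[unfolded Y_def]])
    have numeq: "\<And>t. num t = occ [a] \<gamma> (c t)"
    proof -
      fix t
      have s1: "{i\<in>Y. i < e t \<and> \<alpha> i = a} = e ` {m\<in>Mx. m<t \<and> \<beta> m = a}"
        unfolding Y_def selB using sm \<beta> by (auto simp: strict_mono_less)
      have s2: "{i\<in>Y. i < e t} = e ` {m\<in>Mx. m<t}"
        unfolding Y_def selB using sm by (auto simp: strict_mono_less)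
      have "num t = card {i\<in>Y. i < e t \<and> \<alpha> i = a}"
        unfolding num_def s1 by (simp add: card_image inj_on_subset[OF injE])
      also have "\<dots> = card {j. j < card {i\<in>Y. i < e t} \<and> \<alpha> (enumerate Y j) = a}"
        by (rule count_enum[OF Yinf])
      also have "card {i\<in>Y. i < e t} = c t"
        unfolding s2 c_def by (simp add: card_image inj_on_subset[OF injE])
      finally show "num t = occ [a] \<gamma> (c t)"
        unfolding occ_single \<gamma>_def dfa_select_def Y_def by simp
    qed
    have cinf: "filterlim (\<lambda>t. c (Suc t)) at_top sequentially"
      unfolding filterlim_at_top eventually_sequentially
    proof
      fix Z :: nat
      show "\<exists>N. \<forall>n\<ge>N. Z \<le> c (Suc n)"
      proof (intro exI allI impI)
        fix n assume n: "enumerate Mx Z \<le> n"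
        have sub: "enumerate Mx ` {..Z} \<subseteq> {m\<in>Mx. m < Suc n}"
        proof
          fix x assume "x \<in> enumerate Mx ` {..Z}"
          then obtain j where j: "x = enumerate Mx j" "j \<le> Z" by auto
          have "enumerate Mx j \<le> enumerate Mx Z" using j(2) False by simp
          then show "x \<in> {m\<in>Mx. m < Suc n}" using j n enumerate_in_set[OF False] by auto
        qed
        have "card (enumerate Mx ` {..Z}) = Suc Z"
          using inj_enumerate[OF False] by (simp add: card_image inj_on_subset)
        moreover have "card (enumerate Mx ` {..Z}) \<le> c (Suc n)"
          unfolding c_def by (rule card_mono[OF _ sub]) simp
        ultimately show "Z \<le> c (Suc n)" by simp
      qed
    qed
    have F: "(\<lambda>t. real (occ [a] \<gamma> (c (Suc t))) / real (c (Suc t))) \<longlonglongrightarrow> p a"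
      using filterlim_compose[OF hypB cinf] by (simp add: o_def)
    have HS: "(\<lambda>t. real (H t) / real (Suc t)) \<longlonglongrightarrow> mu p u" by (rule ratio_Suc[OF IH'])
    have cS: "(\<lambda>t. real (c (Suc t)) / real (Suc t)) \<longlonglongrightarrow> mu p u"
    proof (rule bounded_diff_ratio[OF HS _ Dinf, where K = "real k"])
      fix t show "\<bar>real (c (Suc t)) - real (H t)\<bar> \<le> real k" using Hb[of t] by linarith
    qed
    have occmul: "\<And>n. real (occ [a] \<gamma> n) = real (occ [a] \<gamma> n) / real n * real n"
    proof -
      fix n show "real (occ [a] \<gamma> n) = real (occ [a] \<gamma> n) / real n * real n"
        by (cases "n = 0") (simp_all add: occ_single)
    qed
    have "(\<lambda>t. real (occ [a] \<gamma> (c (Suc t))) / real (c (Suc t)) * (real (c (Suc t)) / real (Suc t)))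
        \<longlonglongrightarrow> p a * mu p u"
      by (rule tendsto_mult[OF F cS])
    then have numS: "(\<lambda>t. real (num (Suc t)) / real (Suc t)) \<longlonglongrightarrow> p a * mu p u"
    proof (rule back_subst[where P = "\<lambda>f. f \<longlonglongrightarrow> p a * mu p u"])
      show "(\<lambda>t. real (occ [a] \<gamma> (c (Suc t))) / real (c (Suc t)) * (real (c (Suc t)) / real (Suc t))) =
          (\<lambda>t. real (num (Suc t)) / real (Suc t))"
      proof
        fix t
        have "real (num (Suc t)) = real (occ [a] \<gamma> (c (Suc t))) / real (c (Suc t)) * real (c (Suc t))"
          using numeq occmul by metis
        then show "real (occ [a] \<gamma> (c (Suc t))) / real (c (Suc t)) * (real (c (Suc t)) / real (Suc t)) =
            real (num (Suc t)) / real (Suc t)" by simp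
      qed
    qed
    have "(\<lambda>t. real (G (Suc t)) / real (Suc t)) \<longlonglongrightarrow> p a * mu p u"
    proof (rule bounded_diff_ratio[OF numS _ Dinf, where K = "real k"])
      fix t show "\<bar>real (G (Suc t)) - real (num (Suc t))\<bar> \<le> real k" using Gb[of "Suc t"] by linarith
    qed
    then have "(\<lambda>t. real (G t) / real t) \<longlonglongrightarrow> p a * mu p u"
      using filterlim_sequentially_Suc[of "\<lambda>t. real (G t) / real t"] by simp
    then show ?thesis unfolding mu_app G_def \<beta>_def by (simp add: mult.commute)
  qed
qed



lemma occ_Nil: "occ [] \<beta> N = Suc N"
proof -
  have "{i. i + length [] \<le> N \<and> (\<forall>j<length []. \<beta> (i + j) = [] ! j)} = {..N}" by auto
  then show ?thesis unfolding occ_def by simp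
qed

theorem lemma5p3:
  fixes p :: "'a::countable \<Rightarrow> real" and \<alpha> :: "nat \<Rightarrow> 'a"
  assumes "bernoulli_dist p"
    and "mu_distributed p \<alpha>"
  shows "(\<forall>A :: (nat, 'a) dfa. wf_dfa A \<longrightarrow> strongly_connected A \<longrightarrow>
            infinite (selected A \<alpha>) \<longrightarrow> mu_distributed p (dfa_select A \<alpha>))
     \<longleftrightarrow>
         (\<forall>A :: (nat, 'a) dfa. wf_dfa A \<longrightarrow> strongly_connected A \<longrightarrow>
            infinite (selected A \<alpha>) \<longrightarrow>
            (\<forall>a. (\<lambda>N. real (occ [a] (dfa_select A \<alpha>) N) / real N) \<longlonglongrightarrow> p a))"
proof
  assume H: "\<forall>A :: (nat, 'a) dfa. wf_dfa A \<longrightarrow> strongly_connected A \<longrightarrow>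
            infinite (selected A \<alpha>) \<longrightarrow> mu_distributed p (dfa_select A \<alpha>)"
  show "\<forall>A :: (nat, 'a) dfa. wf_dfa A \<longrightarrow> strongly_connected A \<longrightarrow>
            infinite (selected A \<alpha>) \<longrightarrow>
            (\<forall>a. (\<lambda>N. real (occ [a] (dfa_select A \<alpha>) N) / real N) \<longlonglongrightarrow> p a)"
  proof (intro allI impI)
    fix A :: "(nat,'a) dfa" and a
    assume "wf_dfa A" "strongly_connected A" "infinite (selected A \<alpha>)"
    then have "mu_distributed p (dfa_select A \<alpha>)" using H by blast
    then show "(\<lambda>N. real (occ [a] (dfa_select A \<alpha>) N) / real N) \<longlonglongrightarrow> p a"
      unfolding mu_distributed_def
    proof -
      assume "\<forall>w. w \<noteq> [] \<longrightarrow> (\<lambda>N. real (occ w (dfa_select A \<alpha>) N) / real N) \<longlonglongrightarrow> mu p w"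
      then have "(\<lambda>N. real (occ [a] (dfa_select A \<alpha>) N) / real N) \<longlonglongrightarrow> mu p [a]" by simp
      moreover have "mu p [a] = p a" by (simp add: mu_def)
      ultimately show ?thesis by simp
    qed
  qed
next
  assume H: "\<forall>A :: (nat, 'a) dfa. wf_dfa A \<longrightarrow> strongly_connected A \<longrightarrow>
            infinite (selected A \<alpha>) \<longrightarrow>
            (\<forall>a. (\<lambda>N. real (occ [a] (dfa_select A \<alpha>) N) / real N) \<longlonglongrightarrow> p a)"
  show "\<forall>A :: (nat, 'a) dfa. wf_dfa A \<longrightarrow> strongly_connected A \<longrightarrow>
            infinite (selected A \<alpha>) \<longrightarrow> mu_distributed p (dfa_select A \<alpha>)"
  proof (intro allI impI)
    fix A :: "(nat,'a) dfa"
    assume A: "wf_dfa A" "strongly_connected A" "infinite (selected A \<alpha>)"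
    have all: "(\<lambda>N. real (occ u (dfa_select A \<alpha>) N) / real N) \<longlonglongrightarrow> mu p u" for u
    proof (induction u rule: rev_induct)
      case Nil
      have "(\<lambda>N. real (occ [] (dfa_select A \<alpha>) N) / real N) = (\<lambda>N. real (Suc N) / real N)"
        by (simp add: occ_Nil)
      then show ?case using LIMSEQ_Suc_n_over_n by (simp add: mu_def)
    next
      case (snoc a u)
      show ?case
      proof (rule main_step[OF A _ snoc])
        fix B :: "(nat,'a) dfa"
        assume "wf_dfa B" "strongly_connected B" "infinite (selected B \<alpha>)"
        then show "(\<lambda>N. real (occ [a] (dfa_select B \<alpha>) N) / real N) \<longlonglongrightarrow> p a"
          using H by simp
      qed
    qed
    then show "mu_distributed p (dfa_select A \<alpha>)" unfolding mu_distributed_def by blast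
  qed
qed

end
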